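(* Let $\mathbb{X}\subseteq\mathbb{R}^n$, let $\mathbb{Y}$ be a finite set of classes, and let $D$ be a distribution on $\mathbb{X}\times\mathbb{Y}$ with joint density $p(\bm{x},k)$, marginal density $p(\bm{x})=\sum_k p(\bm{x},k)$ and posterior $p(\mathrm{y}=k\mid\mathbf{x}=\bm{x})=p(\bm{x},k)/p(\bm{x})$. Fix a distance $d$ on $\mathbb{X}$ and $\epsilon>0$, and for $\bm{x}\in\mathbb{X}$ let $\mathbb{V}_{\bm{x}}=\{\bm{x'}\in\mathbb{X}: d(\bm{x},\bm{x'})\le\epsilon\}$. For a classifier $h:\mathbb{X}\to\mathbb{Y}$ and $(\bm{x},y)\in\mathbb{X}\times\mathbb{Y}$, say $\operatorname{Rob}(h,\bm{x},y;\mathbb{V}_{\bm{x}})$ holds iff both (i) there is no $\bm{x'}\in\mathbb{X}$ with $d(\bm{x},\bm{x'})\le\epsilon$ and $h(\bm{x'})\neq y$, and (ii) there is no $(\bm{x'},y')\in\mathbb{X}\times\mathbb{Y}$ with $p(\bm{x'},y')>0$, $d(\bm{x},\bm{x'})\le\epsilon$ and $h(\bm{x'})\neq y'$. Define the irreducible robustness error $$\zeta^\sharp_D=\inf_{h\ \text{measurable}}\ \mathbb{E}_{(\mathbf{x},\mathrm{y})\sim D}\big[1-\mathbf{1}_{\operatorname{Rob}(h,\mathbf{x},\mathrm{y};\mathbb{V}_{\mathbf{x}})}\big].$$ Then $$\zeta^\sharp_D\ \ge\ \int\Big\lceil 1-\max_k p(\mathrm{y}=k\mid\mathbf{x}=\bm{x})\Big\rceil\,p(\bm{x})\,d\bm{x}\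 \ge\ \beta_D .$$
   Context: $\lceil\cdot\rceil$ is the ceiling function, so for $t\in[0,1]$, $\lceil t\rceil=1$ if $t>0$ and $0$ if $t=0$. The Bayes error of $D$ is $\beta_D=\int\big(1-\max_k p(\mathrm{y}=k\mid\mathbf{x}=\bm{x})\big)\,p(\bm{x})\,d\bm{x}$. *)

theory Defs
  imports "HOL-Analysis.Analysis"
begin

text \<open>Joint density p x k on X x Y (X a Lebesgue-measurable subset of R^n, Y a finite type).\<close>

definition marginal :: "('x \<Rightarrow> 'y::finite \<Rightarrow> real) \<Rightarrow> 'x \<Rightarrow> real" where
  "marginal p x = (\<Sum>k\<in>UNIV. p x k)"

definition posterior :: "('x \<Rightarrow> 'y::finite \<Rightarrow> real) \<Rightarrow> 'x \<Rightarrow> 'y \<Rightarrow> real" where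
  "posterior p x k = p x k / marginal p x"

definition Rob :: "'x set \<Rightarrow> ('x \<Rightarrow> 'y \<Rightarrow> real) \<Rightarrow> ('x \<Rightarrow> 'x \<Rightarrow> real) \<Rightarrow> real
    \<Rightarrow> ('x \<Rightarrow> 'y) \<Rightarrow> 'x \<Rightarrow> 'y \<Rightarrow> bool" where
  "Rob X p d \<epsilon> h x y \<longleftrightarrow>
     \<not> (\<exists>x'\<in>X. d x x' \<le> \<epsilon> \<and> h x' \<noteq> y) \<and>
     \<not> (\<exists>x'\<in>X. \<exists>y'. p x' y' > 0 \<and> d x x' \<le> \<epsilon> \<and> h x' \<noteq> y')"

text \<open>Expectation over D (density p w.r.t. Lebesgue x counting measure on X x Y)
  of a [0,inf]-valued function; nn_integral (lower integral).\<close>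
definition expect_D :: "(real^'n) set \<Rightarrow> (real^'n \<Rightarrow> 'y::finite \<Rightarrow> real)
    \<Rightarrow> (real^'n \<Rightarrow> 'y \<Rightarrow> ennreal) \<Rightarrow> ennreal" where
  "expect_D X p f = (\<integral>\<^sup>+ x\<in>X. (\<Sum>k\<in>UNIV. ennreal (p x k) * f x k) \<partial>lborel)"

definition irreducible_rob_error :: "(real^'n) set \<Rightarrow> (real^'n \<Rightarrow> 'y::finite \<Rightarrow> real)
    \<Rightarrow> (real^'n \<Rightarrow> real^'n \<Rightarrow> real) \<Rightarrow> real \<Rightarrow> ennreal" where
  "irreducible_rob_error X p d \<epsilon> =
     (INF h \<in> {h. h \<in> measurable (restrict_space borel X) (count_space UNIV)}.
        expect_D X p (\<lambda>x y. ennreal (1 - (if Rob X p d \<epsilon> h x y then 1 else 0))))"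

definition bayes_error :: "(real^'n) set \<Rightarrow> (real^'n \<Rightarrow> 'y::finite \<Rightarrow> real) \<Rightarrow> ennreal" where
  "bayes_error X p =
     (\<integral>\<^sup>+ x\<in>X. ennreal ((1 - Max (range (posterior p x))) * marginal p x) \<partial>lborel)"

end

theory Submission
  imports Defs
begin

lemma Max_post_ge:
  fixes p :: "'x \<Rightarrow> 'y::finite \<Rightarrow> real"
  shows "posterior p x k \<le> Max (range (posterior p x))"
  by (rule Max_ge) auto

lemma pointwise:
  fixes p :: "'x \<Rightarrow> 'y::finite \<Rightarrow> real"
  assumes nn: "\<And>k. p x k \<ge> 0"
    and robfalse: "\<And>k1 k2. k1 \<noteq> k2 \<Longrightarrow> p x k1 > 0 \<Longrightarrow> p x k2 > 0 \<Longrightarrow> \<forall>k. \<not> R k"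
  shows "ennreal (of_int \<lceil>1 - Max (range (posterior p x))\<rceil> * marginal p x)
         \<le> (\<Sum>k\<in>UNIV. ennreal (p x k) * ennreal (1 - (if R k then 1 else 0)))"
proof (cases "\<exists>k1 k2. k1 \<noteq> k2 \<and> p x k1 > 0 \<and> p x k2 > 0")
  case True
  then obtain k1 k2 where "k1 \<noteq> k2" "p x k1 > 0" "p x k2 > 0" by blast
  with robfalse have nR: "\<And>k. \<not> R k" by blast
  have m0: "marginal p x \<ge> 0" unfolding marginal_def using nn by (simp add: sum_nonneg)
  have "posterior p x k1 \<ge> 0" unfolding posterior_def using nn m0 by simp
  with Max_post_ge[of p x k1] have "Max (range (posterior p x)) \<ge> 0" by linarith
  hence "1 - Max (range (posterior p x)) \<le> 1" by linarith
  hence "\<lceil>1 - Max (range (posterior p x))\<rceil> \<le> 1" by (metis ceiling_le_iff of_int_1)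
  hence c: "of_int \<lceil>1 - Max (range (posterior p x))\<rceil> \<le> (1::real)" by simp
  have "(\<Sum>k\<in>UNIV. ennreal (p x k) * ennreal (1 - (if R k then 1 else 0)))
        = (\<Sum>k\<in>UNIV. ennreal (p x k))" using nR by simp
  also have "\<dots> = ennreal (marginal p x)" unfolding marginal_def
    using nn by (simp add: sum_ennreal)
  finally show ?thesis using c m0
    by (metis ennreal_leI mult_left_le_one_le mult.commute mult_right_le_one_le order.refl
        mult_left_le dual_order.trans mult_le_one)
next
  case False
  show ?thesis
  proof (cases "marginal p x = 0")
    case True thus ?thesis by simp
  next
    case m: False
    have "\<exists>k0. p x k0 > 0"
    proof (rule ccontr)
      assume "\<not> ?thesis"
      hence "\<And>k. p x k = 0" using nn by (metis less_eq_real_def)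
      thus False using m unfolding marginal_def by simp
    qed
    then obtain k0 where k0: "p x k0 > 0" by blast
    have oth: "p x k = 0" if "k \<noteq> k0" for k
      using False k0 nn[of k] that by (metis less_eq_real_def)
    have "marginal p x = p x k0 + (\<Sum>k\<in>UNIV - {k0}. p x k)"
      unfolding marginal_def by (simp add: sum.remove)
    also have "(\<Sum>k\<in>UNIV - {k0}. p x k) = 0" using oth by simp
    finally have mk: "marginal p x = p x k0" by simp
    have "posterior p x k0 = 1" unfolding posterior_def mk using k0 by simp
    with Max_post_ge[of p x k0] have "Max (range (posterior p x)) \<ge> 1" by simp
    hence "1 - Max (range (posterior p x)) \<le> 0" by linarith
    hence "\<lceil>1 - Max (range (posterior p x))\<rceil> \<le> 0" by (metis ceiling_le_iff of_int_0)
    hence "of_int \<lceil>1 - Max (range (posterior p x))\<rceil> \<le> (0::real)" by simp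
    moreover have "marginal p x \<ge> 0" using mk k0 by simp
    ultimately have "of_int \<lceil>1 - Max (range (posterior p x))\<rceil> * marginal p x \<le> 0"
      by (simp add: mult_nonpos_nonneg)
    hence "ennreal (of_int \<lceil>1 - Max (range (posterior p x))\<rceil> * marginal p x) = 0"
      by (simp add: ennreal_eq_0_iff)
    thus ?thesis by simp
  qed
qed

theorem theorem3:
  fixes X :: "(real^'n) set" and p :: "real^'n \<Rightarrow> 'y::finite \<Rightarrow> real"
    and d :: "real^'n \<Rightarrow> real^'n \<Rightarrow> real" and \<epsilon> :: real
  assumes X_meas: "X \<in> sets lborel"
    and p_nonneg: "\<And>x k. x \<in> X \<Longrightarrow> p x k \<ge> 0"
    and p_meas: "\<And>k. (\<lambda>x. p x k) \<in> borel_measurable lborel"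
    and p_total: "(\<integral>\<^sup>+ x\<in>X. ennreal (marginal p x) \<partial>lborel) = 1"
    and d_zero: "\<And>x x'. x \<in> X \<Longrightarrow> x' \<in> X \<Longrightarrow> d x x' = 0 \<longleftrightarrow> x = x'"
    and d_sym: "\<And>x x'. x \<in> X \<Longrightarrow> x' \<in> X \<Longrightarrow> d x x' = d x' x"
    and d_tri: "\<And>x x' x''. x \<in> X \<Longrightarrow> x' \<in> X \<Longrightarrow> x'' \<in> X \<Longrightarrow> d x x'' \<le> d x x' + d x' x''"
    and eps_pos: "\<epsilon> > 0"
  shows "irreducible_rob_error X p d \<epsilon>
           \<ge> (\<integral>\<^sup>+ x\<in>X. ennreal (of_int \<lceil>1 - Max (range (posterior p x))\<rceil> * marginal p x) \<partial>lborel)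
       \<and> (\<integral>\<^sup>+ x\<in>X. ennreal (of_int \<lceil>1 - Max (range (posterior p x))\<rceil> * marginal p x) \<partial>lborel)
           \<ge> bayes_error X p"
proof
  show "irreducible_rob_error X p d \<epsilon>
           \<ge> (\<integral>\<^sup>+ x\<in>X. ennreal (of_int \<lceil>1 - Max (range (posterior p x))\<rceil> * marginal p x) \<partial>lborel)"
    unfolding irreducible_rob_error_def expect_D_def
  proof (rule INF_greatest)
    fix h :: "real^'n \<Rightarrow> 'y" assume "h \<in> {h. h \<in> measurable (restrict_space borel X) (count_space UNIV)}"
    show "(\<integral>\<^sup>+ x\<in>X. ennreal (of_int \<lceil>1 - Max (range (posterior p x))\<rceil> * marginal p x) \<partial>lborel)
      \<le> (\<integral>\<^sup>+ x\<in>X. (\<Sum>k\<in>UNIV. ennreal (p x k) *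
            ennreal (1 - (if Rob X p d \<epsilon> h x k then 1 else 0))) \<partial>lborel)"
    proof (rule nn_integral_mono)
      fix x
      show "ennreal (of_int \<lceil>1 - Max (range (posterior p x))\<rceil> * marginal p x) * indicator X x
        \<le> (\<Sum>k\<in>UNIV. ennreal (p x k) *
            ennreal (1 - (if Rob X p d \<epsilon> h x k then 1 else 0))) * indicator X x"
      proof (cases "x \<in> X")
        case False thus ?thesis by simp
      next
        case xX: True
        have dxx: "d x x \<le> \<epsilon>" using d_zero[OF xX xX] eps_pos by simp
        have "ennreal (of_int \<lceil>1 - Max (range (posterior p x))\<rceil> * marginal p x)
          \<le> (\<Sum>k\<in>UNIV. ennreal (p x k) *
            ennreal (1 - (if Rob X p d \<epsilon> h x k then 1 else 0)))"
        proof (rule pointwise)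
          show "\<And>k. p x k \<ge> 0" using p_nonneg xX by blast
          fix k1 k2 :: 'y assume "k1 \<noteq> k2" "p x k1 > 0" "p x k2 > 0"
          hence "h x \<noteq> k1 \<or> h x \<noteq> k2" by auto
          thus "\<forall>k. \<not> Rob X p d \<epsilon> h x k"
            unfolding Rob_def using xX dxx \<open>p x k1 > 0\<close> \<open>p x k2 > 0\<close> by blast
        qed
        thus ?thesis using xX by simp
      qed
    qed
  qed
next
  show "(\<integral>\<^sup>+ x\<in>X. ennreal (of_int \<lceil>1 - Max (range (posterior p x))\<rceil> * marginal p x) \<partial>lborel)
           \<ge> bayes_error X p"
    unfolding bayes_error_def
  proof (rule nn_integral_mono)
    fix x
    show "ennreal ((1 - Max (range (posterior p x))) * marginal p x) * indicator X x
      \<le> ennreal (of_int \<lceil>1 - Max (range (posterior p x))\<rceil> * marginal p x) * indicator X x"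
    proof (cases "x \<in> X")
      case False thus ?thesis by simp
    next
      case xX: True
      have m0: "marginal p x \<ge> 0" unfolding marginal_def using p_nonneg[OF xX] by (simp add: sum_nonneg)
      have "(1 - Max (range (posterior p x))) * marginal p x
          \<le> of_int \<lceil>1 - Max (range (posterior p x))\<rceil> * marginal p x"
        using m0 by (intro mult_right_mono) auto
      thus ?thesis using xX by (simp add: ennreal_leI)
    qed
  qed
qed

end
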